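(* Let $(X,\{\tau_k:k<\omega\})$ be a GLP-space and $n<\omega$, and suppose $(X,\tau_{n+1})$ is compact. Then for all $A,B\subseteq X$ and every limit ordinal $\lambda$: $$d_n^\lambda[A]\subseteq d_n(B)\iff \exists\alpha<\lambda\ \ d_n^\alpha[A]\subseteq d_n(B).$$
   Context: For a topology $\tau_n$ on $X$, $d_n(A)$ denotes the set of $\tau_n$-limit points of $A\subseteq X$. A GLP-space is a nonempty set $X$ with topologies $\tau_n$, $n<\omega$, such that $({\mathcal P}(X),\{d_n\})$ is a GLP-algebra, i.e. for all $n$, $m<n$, $x,y\subseteq X$: $d_n(x\cup y)=d_n(x)\cup d_n(y)$; $d_n(\emptyset)=\emptyset$; $d_n(x)=d_n(x\setminus d_n(x))$; $d_n(x)\subseteq d_m(x)$; $d_m(x)\subseteq X\setminus d_n(X\setminus d_m(x))$. For $A\subseteq X$ define by transfinite recursion $d_n^0[A]=X$, $d_n^{\alpha+1}[A]=d_n(d_n^\alpha[A]\cap A)$, and $d_n^\lambda[A]=\bigcap_{\alpha<\lambda}d_n^\alpha[A]$ for limit $\lambda$. *)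

theory Defs
  imports "HOL-Analysis.Analysis"
begin

definition dop :: "(nat \<Rightarrow> 'a topology) \<Rightarrow> nat \<Rightarrow> 'a set \<Rightarrow> 'a set" where
  "dop \<tau> n A = (\<tau> n) derived_set_of A"

text \<open>GLP-space: nonempty X, topologies tau_n on X, and (P(X), d_n) a GLP-algebra.\<close>
definition glp_space :: "'a set \<Rightarrow> (nat \<Rightarrow> 'a topology) \<Rightarrow> bool" where
  "glp_space X \<tau> \<longleftrightarrow> X \<noteq> {} \<and> (\<forall>n. topspace (\<tau> n) = X) \<and>
    (\<forall>n x y. x \<subseteq> X \<and> y \<subseteq> X \<longrightarrow> dop \<tau> n (x \<union> y) = dop \<tau> n x \<union> dop \<tau> n y) \<and>
    (\<forall>n. dop \<tau> n {} = {}) \<and>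
    (\<forall>n x. x \<subseteq> X \<longrightarrow> dop \<tau> n x = dop \<tau> n (x - dop \<tau> n x)) \<and>
    (\<forall>n m x. m < n \<and> x \<subseteq> X \<longrightarrow> dop \<tau> n x \<subseteq> dop \<tau> m x) \<and>
    (\<forall>n m x. m < n \<and> x \<subseteq> X \<longrightarrow> dop \<tau> m x \<subseteq> X - dop \<tau> n (X - dop \<tau> m x))"

text \<open>Transfinite iterates d_n^alpha[A]; ordinals alpha are represented as elements of
  an arbitrary well-ordered type (alpha corresponds to the order type of its initial segment).\<close>
definition dpow :: "(nat \<Rightarrow> 'a topology) \<Rightarrow> nat \<Rightarrow> 'a set \<Rightarrow> 'a set \<Rightarrow> 'o::wellorder \<Rightarrow> 'a set" where
  "dpow \<tau> n X A = wfrec {(x, y). x < y}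
     (\<lambda>f \<alpha>. if \<not> (\<exists>\<beta>. \<beta> < \<alpha>) then X
            else if (\<exists>\<beta>. \<beta> < \<alpha> \<and> (\<forall>\<gamma>. \<gamma> < \<alpha> \<longrightarrow> \<gamma> \<le> \<beta>))
              then dop \<tau> n (f (THE \<beta>. \<beta> < \<alpha> \<and> (\<forall>\<gamma>. \<gamma> < \<alpha> \<longrightarrow> \<gamma> \<le> \<beta>)) \<inter> A)
            else (\<Inter>\<beta>\<in>{\<beta>. \<beta> < \<alpha>}. f \<beta>))"

definition is_limit :: "'o::wellorder \<Rightarrow> bool" where
  "is_limit l \<longleftrightarrow> (\<exists>\<beta>. \<beta> < l) \<and> (\<forall>\<beta>. \<beta> < l \<longrightarrow> (\<exists>\<gamma>. \<beta> < \<gamma> \<and> \<gamma> < l))"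

end

theory Submission
  imports Defs
begin

lemma cut_img: "cut f {(x, y). x < y} (a::'o::wellorder) ` {\<beta>. \<beta> < a} = f ` {\<beta>. \<beta> < a}"
  by (auto simp: cut_apply image_def)

lemma dpow_eq:
  "dpow \<tau> n X A (\<alpha>::'o::wellorder) =
     (if \<not> (\<exists>\<beta>. \<beta> < \<alpha>) then X
      else if (\<exists>\<beta>. \<beta> < \<alpha> \<and> (\<forall>\<gamma>. \<gamma> < \<alpha> \<longrightarrow> \<gamma> \<le> \<beta>))
        then dop \<tau> n (dpow \<tau> n X A (THE \<beta>. \<beta> < \<alpha> \<and> (\<forall>\<gamma>. \<gamma> < \<alpha> \<longrightarrow> \<gamma> \<le> \<beta>)) \<inter> A)
      else (\<Inter>\<beta>\<in>{\<beta>. \<beta> < \<alpha>}. dpow \<tau> n X A \<beta>))"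
proof -
  have w: "wf {(x, y). x < (y::'o)}" by (rule wf)
  show ?thesis
  proof (cases "\<exists>\<beta>. \<beta> < \<alpha> \<and> (\<forall>\<gamma>. \<gamma> < \<alpha> \<longrightarrow> \<gamma> \<le> \<beta>)")
    case True
    then obtain p where p: "p < \<alpha>" "\<forall>\<gamma>. \<gamma> < \<alpha> \<longrightarrow> \<gamma> \<le> p" by blast
    have th: "(THE \<beta>. \<beta> < \<alpha> \<and> (\<forall>\<gamma>. \<gamma> < \<alpha> \<longrightarrow> \<gamma> \<le> \<beta>)) = p"
      using p by (auto intro!: the_equality intro: order.antisym)
    show ?thesis
      unfolding dpow_def
      apply (subst wfrec[OF w])
      using True p by (simp add: th cut_apply)
  next
    case False
    show ?thesis
      unfolding dpow_def
      apply (subst wfrec[OF w])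
      apply (simp only: cut_img)
      using False by (simp del: not_all not_ex add: if_not_P[OF False])
  qed
qed

lemma dpow_succ:
  assumes "p < \<alpha>" "\<forall>\<gamma>. \<gamma> < \<alpha> \<longrightarrow> \<gamma> \<le> p"
  shows "dpow \<tau> n X A (\<alpha>::'o::wellorder) = dop \<tau> n (dpow \<tau> n X A p \<inter> A)"
proof -
  have "(THE \<beta>. \<beta> < \<alpha> \<and> (\<forall>\<gamma>. \<gamma> < \<alpha> \<longrightarrow> \<gamma> \<le> \<beta>)) = p"
    using assms by (auto intro!: the_equality intro: order.antisym)
  then show ?thesis using assms by (subst dpow_eq) auto
qed

lemma dpow_lim:
  assumes "\<exists>\<beta>. \<beta> < \<alpha>" "\<forall>p. p < \<alpha> \<longrightarrow> (\<exists>\<gamma>. \<gamma> < \<alpha> \<and> \<not> \<gamma> \<le> p)"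
  shows "dpow \<tau> n X A (\<alpha>::'o::wellorder) = (\<Inter>\<beta>\<in>{\<beta>. \<beta> < \<alpha>}. dpow \<tau> n X A \<beta>)"
  using assms by (subst dpow_eq) auto

lemma dop_closed:
  assumes g: "glp_space X \<tau>"
  shows "closedin (\<tau> n) (dop \<tau> n Y)"
proof -
  have top: "topspace (\<tau> n) = X" using g by (simp add: glp_space_def)
  have ax: "\<And>x. x \<subseteq> X \<Longrightarrow> dop \<tau> n x = dop \<tau> n (x - dop \<tau> n x)"
    and e: "dop \<tau> n {} = {}" using g by (auto simp: glp_space_def)
  have "dop \<tau> n (dop \<tau> n Y) \<subseteq> dop \<tau> n Y"
  proof
    fix p assume pd: "p \<in> dop \<tau> n (dop \<tau> n Y)"
    show "p \<in> dop \<tau> n Y"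
    proof (rule ccontr)
      assume np: "p \<notin> dop \<tau> n Y"
      have ptop: "p \<in> topspace (\<tau> n)" using pd by (simp add: dop_def in_derived_set_of)
      then obtain U where U: "p \<in> U" "openin (\<tau> n) U" "\<forall>y. y \<noteq> p \<and> y \<in> Y \<longrightarrow> y \<notin> U"
        using np by (auto simp: dop_def in_derived_set_of)
      define S where "S = {p} \<union> (U \<inter> dop \<tau> n {p})"
      have SX: "S \<subseteq> X" using ptop top by (auto simp: S_def dop_def derived_set_of_def)
      have "S \<subseteq> dop \<tau> n S"
      proof
        fix s assume "s \<in> S"
        then consider "s = p" | "s \<in> dop \<tau> n {p}" by (auto simp: S_def)
        then show "s \<in> dop \<tau> n S"
        proof cases
          case 2
          then show ?thesis using derived_set_of_mono[of "{p}" S "\<tau> n"]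
            by (auto simp: S_def dop_def)
        next
          case 1
          show ?thesis unfolding dop_def in_derived_set_of
          proof (intro conjI allI impI)
            show "s \<in> topspace (\<tau> n)" using 1 ptop by simp
            fix V assume V: "s \<in> V \<and> openin (\<tau> n) V"
            then have "p \<in> U \<inter> V" "openin (\<tau> n) (U \<inter> V)" using U 1 by auto
            then obtain q where q: "q \<noteq> p" "q \<in> dop \<tau> n Y" "q \<in> U \<inter> V"
              using pd by (simp add: dop_def in_derived_set_of) blast
            have "q \<in> dop \<tau> n {p}"
              unfolding dop_def in_derived_set_of
            proof (intro conjI allI impI)
              show "q \<in> topspace (\<tau> n)" using q by (simp add: dop_def in_derived_set_of)
              fix W assume W: "q \<in> W \<and> openin (\<tau> n) W"
              then have "q \<in> W \<inter> U" "openin (\<tau> n) (W \<inter> U)" using q U by auto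
              then obtain y where "y \<noteq> q" "y \<in> Y" "y \<in> W \<inter> U"
                using q(2) by (simp add: dop_def in_derived_set_of) blast
              then show "\<exists>y. y \<noteq> q \<and> y \<in> {p} \<and> y \<in> W" using U(3) by blast
            qed
            then show "\<exists>y. y \<noteq> s \<and> y \<in> S \<and> y \<in> V" using q 1 by (auto simp: S_def)
          qed
        qed
      qed
      then have h: "S - dop \<tau> n S = {}" by blast
      have "dop \<tau> n S = {}" by (subst ax[OF SX]) (simp only: h e)
      then show False using \<open>S \<subseteq> dop \<tau> n S\<close> by (auto simp: S_def)
    qed
  qed
  then show ?thesis
    by (simp add: closedin_contains_derived_set dop_def derived_set_of_subset_topspace)
qed

lemma dpow_closed:
  assumes g: "glp_space X \<tau>"
  shows "closedin (\<tau> n) (dpow \<tau> n X A (\<alpha>::'o::wellorder))"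
proof (induction \<alpha> rule: less_induct)
  case (less \<alpha>)
  have top: "topspace (\<tau> n) = X" using g by (simp add: glp_space_def)
  show ?case
  proof (cases "\<exists>\<beta>. \<beta> < \<alpha>")
    case False
    then show ?thesis using top by (subst dpow_eq) auto
  next
    case True
    show ?thesis
    proof (cases "\<exists>p. p < \<alpha> \<and> (\<forall>\<gamma>. \<gamma> < \<alpha> \<longrightarrow> \<gamma> \<le> p)")
      case True
      then obtain p where "p < \<alpha>" "\<forall>\<gamma>. \<gamma> < \<alpha> \<longrightarrow> \<gamma> \<le> p" by blast
      then show ?thesis using dop_closed[OF g] by (simp add: dpow_succ)
    next
      case False
      then have "dpow \<tau> n X A \<alpha> = (\<Inter>\<beta>\<in>{\<beta>. \<beta> < \<alpha>}. dpow \<tau> n X A \<beta>)"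
        using \<open>\<exists>\<beta>. \<beta> < \<alpha>\<close> by (intro dpow_lim) auto
      then show ?thesis using \<open>\<exists>\<beta>. \<beta> < \<alpha>\<close> less
        by (auto intro!: closedin_Inter)
    qed
  qed
qed

lemma dpow_anti:
  assumes g: "glp_space X \<tau>"
  shows "\<beta> < \<alpha> \<Longrightarrow> dpow \<tau> n X A (\<alpha>::'o::wellorder) \<subseteq> dpow \<tau> n X A \<beta>"
proof (induction \<alpha> arbitrary: \<beta> rule: less_induct)
  case (less \<alpha>)
  show ?case
  proof (cases "\<exists>p. p < \<alpha> \<and> (\<forall>\<gamma>. \<gamma> < \<alpha> \<longrightarrow> \<gamma> \<le> p)")
    case True
    then obtain p where p: "p < \<alpha>" "\<forall>\<gamma>. \<gamma> < \<alpha> \<longrightarrow> \<gamma> \<le> p" by blast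
    have "dpow \<tau> n X A \<alpha> \<subseteq> dop \<tau> n (dpow \<tau> n X A p)"
      using p by (simp add: dpow_succ dop_def derived_set_of_mono)
    also have "\<dots> \<subseteq> dpow \<tau> n X A p"
      using dpow_closed[OF g, of n A p] by (simp add: closedin_contains_derived_set dop_def)
    also have "\<dots> \<subseteq> dpow \<tau> n X A \<beta>"
      using less p by (cases "\<beta> = p") (auto simp: order.order_iff_strict)
    finally show ?thesis .
  next
    case False
    then have "dpow \<tau> n X A \<alpha> = (\<Inter>\<beta>\<in>{\<beta>. \<beta> < \<alpha>}. dpow \<tau> n X A \<beta>)"
      using less by (intro dpow_lim) auto
    then show ?thesis using less by auto
  qed
qed

theorem mainTheorem6:
  fixes X :: "'a set" and \<tau> :: "nat \<Rightarrow> 'a topology" and n :: nat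
    and A B :: "'a set" and l :: "'o::wellorder"
  assumes "glp_space X \<tau>"
    and "compact_space (\<tau> (Suc n))"
    and "A \<subseteq> X" and "B \<subseteq> X"
    and "is_limit l"
  shows "dpow \<tau> n X A l \<subseteq> dop \<tau> n B \<longleftrightarrow>
         (\<exists>\<alpha><l. dpow \<tau> n X A \<alpha> \<subseteq> dop \<tau> n B)"
proof
  assume "\<exists>\<alpha><l. dpow \<tau> n X A \<alpha> \<subseteq> dop \<tau> n B"
  then show "dpow \<tau> n X A l \<subseteq> dop \<tau> n B" using dpow_anti[OF assms(1)] by blast
next
  assume H: "dpow \<tau> n X A l \<subseteq> dop \<tau> n B"
  note g = assms(1)
  have top: "\<And>k. topspace (\<tau> k) = X" using g by (simp add: glp_space_def)
  have ax5': "\<forall>k m x. m < k \<and> x \<subseteq> X \<longrightarrow> dop \<tau> k x \<subseteq> dop \<tau> m x"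
    using g unfolding glp_space_def by (elim conjE)
  have ax6': "\<forall>k m x. m < k \<and> x \<subseteq> X \<longrightarrow> dop \<tau> m x \<subseteq> X - dop \<tau> k (X - dop \<tau> m x)"
    using g unfolding glp_space_def by (elim conjE)
  have ax5: "\<And>k m x. m < k \<Longrightarrow> x \<subseteq> X \<Longrightarrow> dop \<tau> k x \<subseteq> dop \<tau> m x"
    using ax5' by blast
  have ax6: "\<And>k m x. m < k \<Longrightarrow> x \<subseteq> X \<Longrightarrow> dop \<tau> m x \<subseteq> X - dop \<tau> k (X - dop \<tau> m x)"
    using ax6' by blast
  define U where "U = dop \<tau> n B"
  define K where "K = X - U"
  have Kc: "closedin (\<tau> (Suc n)) K"
  proof -
    have "dop \<tau> n B \<subseteq> X - dop \<tau> (Suc n) (X - dop \<tau> n B)"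
      using ax6[OF lessI assms(4)] .
    then show ?thesis unfolding K_def U_def
      using derived_set_of_subset_topspace[of "\<tau> (Suc n)" "X - dop \<tau> n B"] top[of "Suc n"]
      unfolding closedin_contains_derived_set dop_def by blast
  qed
  have cl: "\<And>\<alpha>. closedin (\<tau> (Suc n)) (dpow \<tau> n X A \<alpha>)"
  proof -
    fix \<alpha>
    have c: "closedin (\<tau> n) (dpow \<tau> n X A \<alpha>)" by (rule dpow_closed[OF g])
    then have sub: "dpow \<tau> n X A \<alpha> \<subseteq> X" using closedin_subset top by metis
    have "dop \<tau> (Suc n) (dpow \<tau> n X A \<alpha>) \<subseteq> dop \<tau> n (dpow \<tau> n X A \<alpha>)"
      using ax5[OF lessI sub] .
    also have "\<dots> \<subseteq> dpow \<tau> n X A \<alpha>" using c by (simp add: closedin_contains_derived_set dop_def)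
    finally show "closedin (\<tau> (Suc n)) (dpow \<tau> n X A \<alpha>)"
      using sub by (simp add: closedin_contains_derived_set dop_def top)
  qed
  show "\<exists>\<alpha><l. dpow \<tau> n X A \<alpha> \<subseteq> dop \<tau> n B"
  proof (rule ccontr)
    assume N: "\<not> (\<exists>\<alpha><l. dpow \<tau> n X A \<alpha> \<subseteq> dop \<tau> n B)"
    define \<U> where "\<U> = (\<lambda>\<alpha>. dpow \<tau> n X A \<alpha> \<inter> K) ` {\<alpha>. \<alpha> < l}"
    have ne: "\<And>\<alpha>. \<alpha> < l \<Longrightarrow> dpow \<tau> n X A \<alpha> \<inter> K \<noteq> {}"
    proof -
      fix \<alpha> assume "\<alpha> < l"
      then have "\<not> dpow \<tau> n X A \<alpha> \<subseteq> U" using N U_def by blast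
      moreover have "dpow \<tau> n X A \<alpha> \<subseteq> X" using cl[of \<alpha>] closedin_subset top by metis
      ultimately show "dpow \<tau> n X A \<alpha> \<inter> K \<noteq> {}" by (auto simp: K_def)
    qed
    have "\<Inter>\<U> \<noteq> {}"
      using assms(2) unfolding compact_space_fip
    proof (elim allE impE, intro conjI ballI allI impI)
      fix C assume "C \<in> \<U>" then show "closedin (\<tau> (Suc n)) C"
        using cl Kc by (auto simp: \<U>_def)
    next
      fix \<F> assume F: "finite \<F> \<and> \<F> \<subseteq> \<U>"
      show "\<Inter>\<F> \<noteq> {}"
      proof (cases "\<F> = {}")
        case True then show ?thesis by simp
      next
        case False
        obtain S where S: "S \<subseteq> {\<alpha>. \<alpha> < l}" "finite S" "\<F> = (\<lambda>\<alpha>. dpow \<tau> n X A \<alpha> \<inter> K) ` S"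
          using F unfolding \<U>_def by (meson finite_subset_image)
        then have Sne: "S \<noteq> {}" using False by auto
        define m where "m = Max S"
        have m: "m \<in> S" "\<forall>s\<in>S. s \<le> m" using S Sne by (auto simp: m_def)
        have "dpow \<tau> n X A m \<inter> K \<subseteq> \<Inter>\<F>"
        proof -
          have "\<forall>s\<in>S. dpow \<tau> n X A m \<inter> K \<subseteq> dpow \<tau> n X A s \<inter> K"
          proof
            fix s assume "s \<in> S"
            then have "s \<le> m" using m by blast
            then have "s < m \<or> s = m" by (simp add: le_less)
            then show "dpow \<tau> n X A m \<inter> K \<subseteq> dpow \<tau> n X A s \<inter> K"
              using dpow_anti[OF g, of s m n A] by blast
          qed
          then show ?thesis using S(3) by auto
        qed
        moreover have "dpow \<tau> n X A m \<inter> K \<noteq> {}" using ne m S by blast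
        ultimately show ?thesis by blast
      qed
    qed
    moreover have "dpow \<tau> n X A l = (\<Inter>\<beta>\<in>{\<beta>. \<beta> < l}. dpow \<tau> n X A \<beta>)"
      using assms(5) unfolding is_limit_def by (intro dpow_lim) (auto simp: not_le)
    moreover obtain b where "b < l" using assms(5) unfolding is_limit_def by blast
    then have "\<Inter>\<U> = (\<Inter>\<beta>\<in>{\<beta>. \<beta> < l}. dpow \<tau> n X A \<beta>) \<inter> K"
      unfolding \<U>_def by auto
    ultimately have "dpow \<tau> n X A l \<inter> K \<noteq> {}" by (simp only: not_False_eq_True)
    then show False using H by (auto simp: K_def U_def)
  qed
qed

end
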